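(* Let $\mathbb{F}$ be a field, let $P(\lambda)\in\mathbb{F}[\lambda]^{m\times n}$ have normal rank $r>0$, and let $P(\lambda)=L(\lambda)E(\lambda)R(\lambda)$ with $L\in\mathbb{F}[\lambda]^{m\times r}$, $E\in\mathbb{F}[\lambda]^{r\times r}$, $R\in\mathbb{F}[\lambda]^{r\times n}$. Let $\rho_{max}$ be the largest minimal index of $\mathcal{R}ow(P)$ and $c_{max}$ the largest minimal index of $\mathcal{C}ol(P)$. Then $$\deg(L)+\deg(E)+\deg(R)\ge\deg(L)+\deg(R)\ge\rho_{max}+c_{max}.$$ Consequently, if $\rho_{max}+c_{max}>\deg(P)$, then no such factorization $P=LER$ (nor any factorization $P=LR$ with $L\in\mathbb{F}[\lambda]^{m\times r}$, $R\in\mathbb{F}[\lambda]^{r\times n}$) has the sum of the degrees of its factors equal to $\deg(P)$.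
   Context: Normal rank: rank over $\mathbb{F}(\lambda)$. Degree of a polynomial matrix: maximum degree of its entries. $\mathcal{R}ow(P)=\{wP:w\in\mathbb{F}(\lambda)^{1\times m}\}$, $\mathcal{C}ol(P)=\{Pv:v\in\mathbb{F}(\lambda)^{n\times1}\}$. Minimal indices of a rational subspace: the degrees of the vectors of a minimal basis, i.e. a basis of polynomial vectors whose sum of degrees is minimal among all polynomial bases. *)

theory Defs
  imports "Jordan_Normal_Form.VS_Connect" "Jordan_Normal_Form.DL_Rank"
    "HOL-Computational_Algebra.Polynomial_Factorial"
begin

text \<open>Polynomial matrices over a field F are 'a poly mat (Jordan_Normal_Form);
  the field of rational functions F(lambda) is 'a poly fract, with the
  canonical embedding to_fract.\<close>

definition emb_vec :: "'a::field poly vec \<Rightarrow> 'a poly fract vec" where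
  "emb_vec v = map_vec to_fract v"

definition emb_mat :: "'a::field poly mat \<Rightarrow> 'a poly fract mat" where
  "emb_mat A = map_mat to_fract A"

definition normal_rank :: "'a::field poly mat \<Rightarrow> nat" where
  "normal_rank P = vec_space.rank (dim_row P) (emb_mat P)"

definition mdeg :: "'a::zero poly mat \<Rightarrow> nat" where
  "mdeg A = Max (insert 0 {degree (A $$ (i, j)) | i j. i < dim_row A \<and> j < dim_col A})"

definition vdeg :: "'a::zero poly vec \<Rightarrow> nat" where
  "vdeg v = Max (insert 0 {degree (v $ i) | i. i < dim_vec v})"

text \<open>Rational row space Row(P) = {w P} (row vectors written as vectors of length n)
  and column space Col(P) = {P v}.\<close>
definition row_space :: "'a::field poly mat \<Rightarrow> 'a poly fract vec set" where
  "row_space P = {transpose_mat (emb_mat P) *\<^sub>v w | w. w \<in> carrier_vec (dim_row P)}"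

definition col_space :: "'a::field poly mat \<Rightarrow> 'a poly fract vec set" where
  "col_space P = {emb_mat P *\<^sub>v v | v. v \<in> carrier_vec (dim_col P)}"

definition poly_basis :: "nat \<Rightarrow> 'a::field poly fract vec set \<Rightarrow> 'a poly vec set \<Rightarrow> bool" where
  "poly_basis n V B \<longleftrightarrow> finite B \<and> B \<subseteq> carrier_vec n \<and>
     LinearCombinations.module.lin_indpt class_ring (module_vec TYPE('a poly fract) n) (emb_vec ` B) \<and>
     LinearCombinations.module.span class_ring (module_vec TYPE('a poly fract) n) (emb_vec ` B) = V"

definition minimal_basis :: "nat \<Rightarrow> 'a::field poly fract vec set \<Rightarrow> 'a poly vec set \<Rightarrow> bool" where
  "minimal_basis n V B \<longleftrightarrow> poly_basis n V B \<and>
     (\<forall>B'. poly_basis n V B' \<longrightarrow> (\<Sum>b\<in>B. vdeg b) \<le> (\<Sum>b\<in>B'. vdeg b))"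

definition max_index :: "'a::zero poly vec set \<Rightarrow> nat" where
  "max_index B = Max (vdeg ` B)"

end

theory Submission imports Defs "Subresultants.More_Homomorphisms" begin

context vec_space
begin

lemma L1_rank_basis:
  assumes A: "A \<in> carrier_mat n nc"
  shows "\<exists>S. S \<subseteq> set (cols A) \<and> lin_indpt S \<and> card S = rank A \<and> set (cols A) \<subseteq> span S"
proof -
  obtain S where S: "maximal S (\<lambda>T. T \<subseteq> set (cols A) \<and> lin_indpt T)"
    using maximal_exists[of "(\<lambda>T. T \<subseteq> set (cols A) \<and> lin_indpt T)" "card (set (cols A))" "{}"]
    by (meson List.finite_set card_mono empty_iff empty_subsetI finite_lin_indpt2 rev_finite_subset)
  have rk: "rank A = card S" using rank_card_indpt[OF A S] .
  have sub: "S \<subseteq> set (cols A)" and li: "lin_indpt S" using S unfolding maximal_def by auto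
  have colsC: "set (cols A) \<subseteq> carrier_vec n" using A cols_dim by blast
  have SC: "S \<subseteq> carrier_vec n" using sub colsC by auto
  have "set (cols A) \<subseteq> span S"
  proof
    fix c assume c: "c \<in> set (cols A)"
    show "c \<in> span S"
    proof (rule ccontr)
      assume nc: "c \<notin> span S"
      have cS: "c \<notin> S" using nc in_own_span[OF SC] by auto
      have cC: "c \<in> carrier_vec n" using c colsC by auto
      have "lin_indpt (S \<union> {c})" using lin_dep_iff_in_span[OF SC li cC cS] nc by simp
      moreover have "S \<union> {c} \<subseteq> set (cols A)" using sub c by auto
      ultimately have "S \<union> {c} = S" using S unfolding maximal_def by blast
      thus False using cS by auto
    qed
  qed
  thus ?thesis using sub li rk by auto
qed

lemma L2_cols_mult_span:
  assumes B: "B \<in> carrier_mat n k" and C: "C \<in> carrier_mat k p"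
  shows "set (cols (B * C)) \<subseteq> span (set (cols B))"
proof
  fix x assume "x \<in> set (cols (B * C))"
  then obtain j where j: "j < p" and x: "x = col (B * C) j"
    using B C by (auto simp: cols_def)
  have "x = B *\<^sub>v col C j" using x col_mult2[OF B C j] by simp
  moreover have "col C j \<in> carrier_vec k" using C j by auto
  ultimately have "x \<in> col_space B" unfolding col_space_eq[OF B] using B by auto
  thus "x \<in> span (set (cols B))" unfolding col_space_def .
qed

lemma L3_card_span:
  assumes fS: "finite S" and fT: "finite T" and TC: "T \<subseteq> carrier_vec n"
    and li: "lin_indpt S" and ST: "S \<subseteq> span T"
  shows "card S \<le> card T" and "card T \<le> card S \<Longrightarrow> span S = span T"
proof -
  obtain C where C: "finite C" "C \<subseteq> carrier_vec n" "C \<subseteq> span T" "C \<inter> S = {}"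
    "int (card C) \<le> int (card T) - int (card S)" "span (S \<union> C) = span T"
    using replacement[OF fS fT TC li ST] by blast
  show "card S \<le> card T" using C(5) by linarith
  assume "card T \<le> card S"
  hence "card C = 0" using C(5) by linarith
  hence "C = {}" using C(1) by auto
  thus "span S = span T" using C(6) by simp
qed

lemma L4_rank_le_mult:
  assumes B: "B \<in> carrier_mat n k" and C: "C \<in> carrier_mat k p"
  shows "rank (B * C) \<le> k"
proof -
  have BC: "B * C \<in> carrier_mat n p" using B C by auto
  obtain S where S: "S \<subseteq> set (cols (B*C))" "lin_indpt S" "card S = rank (B*C)"
    using L1_rank_basis[OF BC] by blast
  have "S \<subseteq> span (set (cols B))" using S(1) L2_cols_mult_span[OF B C] by auto
  moreover have "set (cols B) \<subseteq> carrier_vec n" using B cols_dim by blast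
  ultimately have "card S \<le> card (set (cols B))"
    using L3_card_span(1)[of S "set (cols B)"] S(1,2) finite_subset by blast
  also have "\<dots> \<le> length (cols B)" by (rule card_length)
  also have "\<dots> = k" using B by auto
  finally show ?thesis using S(3) by simp
qed

end


lemma L5_rank_transpose:
  fixes A :: "'a::field mat"
  assumes A: "A \<in> carrier_mat n p"
  shows "vec_space.rank n A \<le> vec_space.rank p A\<^sup>T"
proof -
  have AT: "A\<^sup>T \<in> carrier_mat p n" using A by auto
  obtain T where T: "T \<subseteq> set (cols A\<^sup>T)" "LinearCombinations.module.lin_indpt class_ring (module_vec TYPE('a) p) T"
    "card T = vec_space.rank p A\<^sup>T" "set (cols A\<^sup>T) \<subseteq> LinearCombinations.module.span class_ring (module_vec TYPE('a) p) T"
    using vec_space.L1_rank_basis[OF AT] by blast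
  define k where "k = card T"
  have fT: "finite T" using T(1) finite_subset by blast
  obtain ts where ts: "set ts = T" "distinct ts" using finite_distinct_list[OF fT] by auto
  have lts: "length ts = k" using ts k_def distinct_card by fastforce
  have TC: "set ts \<subseteq> carrier_vec p" using T(1) ts AT cols_dim by blast
  define X where "X = mat_of_cols p ts"
  have X: "X \<in> carrier_mat p k" using lts X_def by auto
  have spanX: "LinearCombinations.module.span class_ring (module_vec TYPE('a) p) T = vec_space.col_space p X"
    unfolding vec_space.col_space_def X_def cols_mat_of_cols[OF TC] ts(1) ..
  have ex: "\<exists>x. x \<in> carrier_vec k \<and> col A\<^sup>T i = X *\<^sub>v x" if i: "i < n" for i
  proof -
    have "col A\<^sup>T i \<in> set (cols A\<^sup>T)" using i AT by (auto simp: cols_def)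
    hence "col A\<^sup>T i \<in> vec_space.col_space p X" using T(4) spanX by auto
    thus ?thesis unfolding vec_space.col_space_eq[OF X] using X by auto
  qed
  define x where "x i = (SOME x. x \<in> carrier_vec k \<and> col A\<^sup>T i = X *\<^sub>v x)" for i
  have x: "x i \<in> carrier_vec k" "col A\<^sup>T i = X *\<^sub>v x i" if "i < n" for i
    using someI_ex[OF ex[OF that]] unfolding x_def by auto
  define N where "N = mat_of_cols k (map x [0..<n])"
  have N: "N \<in> carrier_mat k n" unfolding N_def by auto
  have colN: "col N i = x i" if "i < n" for i
    unfolding N_def using that x(1)[OF that] by (subst col_mat_of_cols, auto)
  have ATeq: "A\<^sup>T = X * N"
  proof (rule mat_col_eqI)
    fix i assume "i < dim_col (X * N)"
    hence i: "i < n" using N by auto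
    show "col A\<^sup>T i = col (X * N) i" using col_mult2[OF X N i] colN[OF i] x(2)[OF i] by simp
  qed (insert AT X N, auto)
  have "A = N\<^sup>T * X\<^sup>T" using ATeq transpose_mult[OF X N] by (metis transpose_transpose)
  moreover have "N\<^sup>T \<in> carrier_mat n k" "X\<^sup>T \<in> carrier_mat k p" using N X by auto
  ultimately have "vec_space.rank n A \<le> k" using vec_space.L4_rank_le_mult by metis
  thus ?thesis using T(3) k_def by simp
qed

lemma L6_span_factor:
  fixes A :: "'a::field mat"
  assumes A: "A \<in> carrier_mat d p" and Q: "Q \<in> carrier_mat d q" and Y: "Y \<in> carrier_mat q p"
    and AQY: "A = Q * Y" and rk: "q \<le> vec_space.rank d A"
  shows "set (cols Q) \<subseteq> LinearCombinations.module.span class_ring (module_vec TYPE('a) d) (set (cols A))"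
    and "LinearCombinations.module.span class_ring (module_vec TYPE('a) d) (set (cols A)) \<subseteq> LinearCombinations.module.span class_ring (module_vec TYPE('a) d) (set (cols Q))"
proof -
  interpret vs: vec_space "TYPE('a)" d .
  obtain S where S: "S \<subseteq> set (cols A)" "vs.lin_indpt S" "card S = vs.rank A"
    using vs.L1_rank_basis[OF A] by blast
  have c2: "set (cols A) \<subseteq> vs.span (set (cols Q))" using vs.L2_cols_mult_span[OF Q Y] AQY by simp
  have QC: "set (cols Q) \<subseteq> carrier_vec d" using Q cols_dim by blast
  have AC: "set (cols A) \<subseteq> carrier_vec d" using A cols_dim by blast
  have fS: "finite S" using S(1) finite_subset by blast
  have "card (set (cols Q)) \<le> card S" using card_length[of "cols Q"] Q S(3) rk by auto
  hence eq: "vs.span S = vs.span (set (cols Q))"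
    using vs.L3_card_span(2)[OF fS _ QC S(2)] S(1) c2 by auto
  have "set (cols Q) \<subseteq> vs.span (set (cols Q))" using vs.in_own_span[OF QC] .
  also have "\<dots> = vs.span S" using eq by simp
  also have "\<dots> \<subseteq> vs.span (set (cols A))" using vs.span_is_monotone[OF S(1)] .
  finally show "set (cols Q) \<subseteq> vs.span (set (cols A))" .
  show "vs.span (set (cols A)) \<subseteq> vs.span (set (cols Q))"
    using vs.span_is_subset[OF c2 vs.span_is_submodule[OF QC]] .
qed


lemma emb_vec_inj: "inj emb_vec"
proof (rule injI)
  fix u v :: "'a::field poly vec" assume "emb_vec u = emb_vec v"
  hence d: "dim_vec u = dim_vec v" and e: "\<And>i. i < dim_vec u \<Longrightarrow> to_fract (u $ i) = to_fract (v $ i)"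
    unfolding emb_vec_def by (metis index_map_vec(2), metis index_map_vec(1) index_map_vec(2))
  show "u = v" using d e by (intro eq_vecI) auto
qed

lemma emb_vec_carrier: "v \<in> carrier_vec n \<Longrightarrow> emb_vec v \<in> carrier_vec n"
  unfolding emb_vec_def by auto

lemma L7_max_le:
  fixes B G :: "'a::field poly vec set"
  assumes mb: "minimal_basis n V B" and fG: "finite G" and GC: "G \<subseteq> carrier_vec n"
    and GV: "emb_vec ` G \<subseteq> V"
    and VG: "V \<subseteq> LinearCombinations.module.span class_ring (module_vec TYPE('a poly fract) n) (emb_vec ` G)"
    and dG: "\<forall>g\<in>G. vdeg g \<le> d" and b: "b \<in> B"
  shows "vdeg b \<le> d"
proof (rule ccontr)
  assume bd: "\<not> vdeg b \<le> d"
  interpret vs: vec_space "TYPE('a poly fract)" n .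
  let ?E = emb_vec
  have fB: "finite B" and BC: "B \<subseteq> carrier_vec n" and li: "vs.lin_indpt (?E ` B)"
    and sp: "vs.span (?E ` B) = V"
    and mn: "\<And>B'. poly_basis n V B' \<Longrightarrow> (\<Sum>b\<in>B. vdeg b) \<le> (\<Sum>b\<in>B'. vdeg b)"
    using mb unfolding minimal_basis_def poly_basis_def by auto
  have inj: "inj_on ?E X" for X using emb_vec_inj by (metis inj_on_subset subset_UNIV)
  define B0 where "B0 = B - {b}"
  have EBC: "?E ` B \<subseteq> carrier_vec n" using BC emb_vec_carrier by blast
  have EB0C: "?E ` B0 \<subseteq> carrier_vec n" using EBC B0_def by auto
  have li0: "vs.lin_indpt (?E ` B0)" using vs.subset_li_is_li[OF li, of "?E ` B0"] B0_def by blast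
  have EbC: "?E b \<in> carrier_vec n" using b BC emb_vec_carrier by blast
  have Eb0: "?E b \<notin> ?E ` B0" using emb_vec_inj B0_def by (auto dest: injD)
  have EBeq: "?E ` B = ?E ` B0 \<union> {?E b}" using b B0_def by auto
  have nb: "?E b \<notin> vs.span (?E ` B0)"
    using vs.lin_dep_iff_in_span[OF EB0C li0 EbC Eb0] li EBeq by simp
  have EbV: "?E b \<in> V" using vs.in_own_span[OF EBC] b sp by auto
  show False
  proof (cases "\<exists>g\<in>G. ?E g \<notin> vs.span (?E ` B0)")
    case False
    hence "?E ` G \<subseteq> vs.span (?E ` B0)" by auto
    hence "vs.span (?E ` G) \<subseteq> vs.span (?E ` B0)"
      using vs.span_is_subset[OF _ vs.span_is_submodule[OF EB0C]] by blast
    thus False using VG EbV nb by auto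
  next
    case True
    then obtain g where g: "g \<in> G" "?E g \<notin> vs.span (?E ` B0)" by blast
    have EgC: "?E g \<in> carrier_vec n" using g GC emb_vec_carrier by blast
    have Eg0: "?E g \<notin> ?E ` B0" using g(2) vs.in_own_span[OF EB0C] by auto
    hence gB0: "g \<notin> B0" by blast
    define B' where "B' = insert g B0"
    have EB': "?E ` B' = ?E ` B0 \<union> {?E g}" unfolding B'_def by auto
    have li': "vs.lin_indpt (?E ` B')"
      using vs.lin_dep_iff_in_span[OF EB0C li0 EgC Eg0] g(2) EB' by simp
    have EgV: "?E g \<in> V" using g GV by auto
    have sub': "?E ` B' \<subseteq> vs.span (?E ` B)"
      using EgV sp vs.in_own_span[OF EBC] B0_def EB' by auto
    have fB0: "finite B0" using fB B0_def by auto
    have cB0: "card B = Suc (card B0)" using fB b B0_def card_Suc_Diff1 by metis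
    have cB': "card B' = card B" using cB0 gB0 fB0 B'_def by simp
    have cEB': "card (?E ` B') = card B'" using card_image[OF inj] .
    have cEB: "card (?E ` B) = card B" using card_image[OF inj] .
    have fB': "finite B'" using fB0 B'_def by simp
    have "vs.span (?E ` B') = vs.span (?E ` B)"
      using vs.L3_card_span(2)[OF _ _ EBC li' sub'] fB' fB cEB' cEB cB' by simp
    hence spV: "vs.span (?E ` B') = V" using sp by simp
    have B'C: "B' \<subseteq> carrier_vec n" using g GC BC B0_def B'_def by auto
    have "poly_basis n V B'" unfolding poly_basis_def using fB' B'C li' spV by auto
    hence le: "(\<Sum>b\<in>B. vdeg b) \<le> (\<Sum>b\<in>B'. vdeg b)" by (rule mn)
    have s1: "(\<Sum>b\<in>B. vdeg b) = vdeg b + (\<Sum>b\<in>B0. vdeg b)"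
      using fB b B0_def by (simp add: sum.remove)
    have s2: "(\<Sum>b\<in>B'. vdeg b) = vdeg g + (\<Sum>b\<in>B0. vdeg b)"
      using fB0 gB0 B'_def by simp
    have "vdeg g \<le> d" using dG g by auto
    thus False using le s1 s2 bd by linarith
  qed
qed


lemma mdeg_ge:
  fixes A :: "'a::zero poly mat"
  assumes "i < dim_row A" "j < dim_col A"
  shows "degree (A $$ (i, j)) \<le> mdeg A"
proof -
  have "{degree (A $$ (i, j)) | i j. i < dim_row A \<and> j < dim_col A}
     \<subseteq> (\<lambda>(i,j). degree (A $$ (i, j))) ` ({..<dim_row A} \<times> {..<dim_col A})" by auto
  hence fin: "finite {degree (A $$ (i, j)) | i j. i < dim_row A \<and> j < dim_col A}"
    using finite_subset by blast
  show ?thesis unfolding mdeg_def using assms by (intro Max_ge) (use fin in auto)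
qed

lemma vdeg_le:
  fixes v :: "'a::zero poly vec"
  assumes "\<And>i. i < dim_vec v \<Longrightarrow> degree (v $ i) \<le> d"
  shows "vdeg v \<le> d"
proof -
  have fin: "finite {degree (v $ i) | i. i < dim_vec v}" by simp
  show ?thesis unfolding vdeg_def using assms fin by (subst Max_le_iff) auto
qed

lemma vdeg_col: "j < dim_col A \<Longrightarrow> vdeg (col A j) \<le> mdeg A"
  by (rule vdeg_le, auto intro: mdeg_ge)

lemma vdeg_row: "i < dim_row A \<Longrightarrow> vdeg (row A i) \<le> mdeg A"
  by (rule vdeg_le, auto intro: mdeg_ge)

lemma emb_cols: "set (cols (emb_mat A)) = emb_vec ` set (cols A)"
  unfolding cols_def emb_mat_def emb_vec_def by auto

lemma emb_rows: "set (rows (emb_mat A)) = emb_vec ` set (rows A)"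
proof -
  have "(emb_mat A)\<^sup>T = emb_mat (A\<^sup>T)" unfolding emb_mat_def by (rule map_mat_transpose)
  thus ?thesis using emb_cols[of "A\<^sup>T"] by (metis cols_transpose)
qed

lemma L8_nonempty:
  fixes A :: "'a::field mat"
  assumes A: "A \<in> carrier_mat k p" and rk: "vec_space.rank k A > 0"
    and V: "LinearCombinations.module.span class_ring (module_vec TYPE('a) k) {} = LinearCombinations.module.span class_ring (module_vec TYPE('a) k) (set (cols A))"
  shows False
proof -
  interpret vs: vec_space "TYPE('a)" k .
  obtain S where S: "S \<subseteq> set (cols A)" "vs.lin_indpt S" "card S = vs.rank A"
    using vs.L1_rank_basis[OF A] by blast
  have AC: "set (cols A) \<subseteq> carrier_vec k" using A cols_dim by blast
  have "S \<subseteq> vs.span {}" using S(1) vs.in_own_span[OF AC] V by auto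
  hence "S \<subseteq> {0\<^sub>v k}" using vs.span_empty by simp
  moreover have "S \<noteq> {}" using S(3) rk by auto
  ultimately have "0\<^sub>v k \<in> S" by auto
  moreover have U: "(UNIV::'a set) \<noteq> {0}" by (metis singletonD UNIV_I zero_neq_one)
  moreover have "0\<^sub>v k \<notin> S"
    using U vs.zero_nin_lin_indpt[of S] S(1,2) AC by (auto simp: class_ring_simps)
  ultimately show False by simp
qed


lemma L9_side:
  fixes A :: "'a::field poly fract mat" and B G :: "'a poly vec set"
  assumes A: "A \<in> carrier_mat k p" and rk: "vec_space.rank k A > 0"
    and mb: "minimal_basis k V B"
    and V: "V = LinearCombinations.module.span class_ring (module_vec TYPE('a poly fract) k) (set (cols A))"
    and fG: "finite G" and GC: "G \<subseteq> carrier_vec k"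
    and GV: "emb_vec ` G \<subseteq> V"
    and VG: "V \<subseteq> LinearCombinations.module.span class_ring (module_vec TYPE('a poly fract) k) (emb_vec ` G)"
    and dG: "\<forall>g\<in>G. vdeg g \<le> d"
  shows "max_index B \<le> d"
proof -
  have fB: "finite B" and sp: "LinearCombinations.module.span class_ring (module_vec TYPE('a poly fract) k) (emb_vec ` B) = V"
    using mb unfolding minimal_basis_def poly_basis_def by auto
  have "B \<noteq> {}"
  proof
    assume "B = {}"
    thus False using L8_nonempty[OF A rk] sp V by auto
  qed
  moreover have "\<forall>b\<in>B. vdeg b \<le> d" using L7_max_le[OF mb fG GC GV VG dG] by blast
  ultimately show ?thesis unfolding max_index_def using fB by (subst Max_le_iff) auto
qed

lemma main_bound:
  fixes P :: "'a::field poly mat" and m n r :: nat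
    and Br Bc :: "'a poly vec set"
  assumes P: "P \<in> carrier_mat m n"
    and rk: "normal_rank P = r" and r_pos: "r > 0"
    and Br: "minimal_basis n (row_space P) Br"
    and Bc: "minimal_basis m (col_space P) Bc"
    and L: "L \<in> carrier_mat m r" and E: "E \<in> carrier_mat r r" and R: "R \<in> carrier_mat r n"
    and PLER: "P = L * E * R"
  shows "max_index Br + max_index Bc \<le> mdeg L + mdeg R"
proof -
  define P' where "P' = emb_mat P"
  define L' where "L' = emb_mat L"
  define E' where "E' = emb_mat E"
  define R' where "R' = emb_mat R"
  have P': "P' \<in> carrier_mat m n" and L': "L' \<in> carrier_mat m r" and E': "E' \<in> carrier_mat r r"
    and R': "R' \<in> carrier_mat r n"
    using P L E R unfolding P'_def L'_def E'_def R'_def emb_mat_def by auto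
  have "P' = L' * E' * R'"
    unfolding P'_def L'_def E'_def R'_def emb_mat_def PLER
    using to_fract_hom.mat_hom_mult[OF mult_carrier_mat[OF L E] R] to_fract_hom.mat_hom_mult[OF L E] by simp
  hence Peq: "P' = L' * (E' * R')" using assoc_mult_mat[OF L' E' R'] by simp
  have rkP: "vec_space.rank m P' = r" using rk P unfolding normal_rank_def P'_def by auto
  have ER: "E' * R' \<in> carrier_mat r n" using E' R' by auto
  note c6 = L6_span_factor[OF P' L' ER Peq, unfolded rkP, OF order_refl]
  have Vc: "col_space P = LinearCombinations.module.span class_ring (module_vec TYPE('a poly fract) m) (set (cols P'))"
  proof -
    have "col_space P = vec_space.col_space m P'"
      using vec_space.col_space_eq[OF P'] P' P unfolding col_space_def P'_def by (auto simp: emb_mat_def)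
    thus ?thesis unfolding vec_space.col_space_def .
  qed
  have c: "max_index Bc \<le> mdeg L"
  proof (rule L9_side[OF P' _ Bc Vc, of "set (cols L)"])
    show "0 < vec_space.rank m P'" using rkP r_pos by simp
    show "set (cols L) \<subseteq> carrier_vec m" using L cols_dim by blast
    show "emb_vec ` set (cols L) \<subseteq> col_space P" using c6(1) Vc emb_cols[of L] L'_def by simp
    show "col_space P \<subseteq> LinearCombinations.module.span class_ring (module_vec TYPE('a poly fract) m) (emb_vec ` set (cols L))"
      using c6(2) Vc emb_cols[of L] L'_def by simp
    show "\<forall>g\<in>set (cols L). vdeg g \<le> mdeg L" using vdeg_col by (auto simp: cols_def)
  qed simp
  have PT: "P'\<^sup>T \<in> carrier_mat n m" and RT: "R'\<^sup>T \<in> carrier_mat n r" and ELT: "E'\<^sup>T * L'\<^sup>T \<in> carrier_mat r m"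
    using P' R' E' L' by auto
  have "P'\<^sup>T = (E' * R')\<^sup>T * L'\<^sup>T" using Peq transpose_mult[OF L' ER] by simp
  also have "\<dots> = (R'\<^sup>T * E'\<^sup>T) * L'\<^sup>T" using transpose_mult[OF E' R'] by simp
  also have "\<dots> = R'\<^sup>T * (E'\<^sup>T * L'\<^sup>T)" using assoc_mult_mat[of "R'\<^sup>T" n r "E'\<^sup>T" r "L'\<^sup>T" m] R' E' L' by auto
  finally have PTeq: "P'\<^sup>T = R'\<^sup>T * (E'\<^sup>T * L'\<^sup>T)" .
  have rkT: "r \<le> vec_space.rank n P'\<^sup>T" using L5_rank_transpose[OF P'] rkP by simp
  note r6 = L6_span_factor[OF PT RT ELT PTeq rkT]
  have Vr: "row_space P = LinearCombinations.module.span class_ring (module_vec TYPE('a poly fract) n) (set (cols P'\<^sup>T))"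
  proof -
    have "row_space P = vec_space.col_space n P'\<^sup>T"
      using vec_space.col_space_eq[OF PT] PT P unfolding row_space_def P'_def by (auto simp: emb_mat_def)
    thus ?thesis unfolding vec_space.col_space_def .
  qed
  have r: "max_index Br \<le> mdeg R"
  proof (rule L9_side[OF PT _ Br Vr, of "set (rows R)"])
    show "0 < vec_space.rank n P'\<^sup>T" using rkT r_pos by simp
    show "set (rows R) \<subseteq> carrier_vec n" using R by (auto simp: rows_def)
    show "emb_vec ` set (rows R) \<subseteq> row_space P" using r6(1) Vr emb_rows[of R] R'_def by simp
    show "row_space P \<subseteq> LinearCombinations.module.span class_ring (module_vec TYPE('a poly fract) n) (emb_vec ` set (rows R))"
      using r6(2) Vr emb_rows[of R] R'_def by simp
    show "\<forall>g\<in>set (rows R). vdeg g \<le> mdeg R" using vdeg_row by (auto simp: rows_def)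
  qed simp
  show ?thesis using c r by simp
qed


theorem lemma3p4:
  fixes P :: "'a::field poly mat" and m n r :: nat
    and Br Bc :: "'a poly vec set"
  assumes P: "P \<in> carrier_mat m n"
    and rk: "normal_rank P = r" and r_pos: "r > 0"
    and Br: "minimal_basis n (row_space P) Br"
    and Bc: "minimal_basis m (col_space P) Bc"
  shows "(\<forall>L E R. L \<in> carrier_mat m r \<longrightarrow> E \<in> carrier_mat r r \<longrightarrow> R \<in> carrier_mat r n \<longrightarrow>
            P = L * E * R \<longrightarrow>
            mdeg L + mdeg E + mdeg R \<ge> mdeg L + mdeg R \<and>
            mdeg L + mdeg R \<ge> max_index Br + max_index Bc)
    \<and> (max_index Br + max_index Bc > mdeg P \<longrightarrow>
        (\<forall>L E R. L \<in> carrier_mat m r \<longrightarrow> E \<in> carrier_mat r r \<longrightarrow> R \<in> carrier_mat r n \<longrightarrow>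
            P = L * E * R \<longrightarrow> mdeg L + mdeg E + mdeg R \<noteq> mdeg P)
      \<and> (\<forall>L R. L \<in> carrier_mat m r \<longrightarrow> R \<in> carrier_mat r n \<longrightarrow>
            P = L * R \<longrightarrow> mdeg L + mdeg R \<noteq> mdeg P))"
proof -
  note mb = main_bound[OF P rk r_pos Br Bc]
  have part1: "mdeg L + mdeg E + mdeg R \<ge> mdeg L + mdeg R \<and>
            mdeg L + mdeg R \<ge> max_index Br + max_index Bc"
    if L: "L \<in> carrier_mat m r" and E: "E \<in> carrier_mat r r" and R: "R \<in> carrier_mat r n"
      and PLER: "P = L * E * R" for L E R
  proof
    show "mdeg L + mdeg E + mdeg R \<ge> mdeg L + mdeg R" by simp
    show "mdeg L + mdeg R \<ge> max_index Br + max_index Bc" by (rule mb[OF L E R PLER])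
  qed
  have part2: "mdeg L + mdeg E + mdeg R \<noteq> mdeg P"
    if gt: "max_index Br + max_index Bc > mdeg P" and L: "L \<in> carrier_mat m r"
      and E: "E \<in> carrier_mat r r"
      and R: "R \<in> carrier_mat r n" and PLER: "P = L * E * R" for L E R
  proof -
    have "max_index Br + max_index Bc \<le> mdeg L + mdeg R" by (rule mb[OF L E R PLER])
    thus ?thesis using gt by linarith
  qed
  have part3: "mdeg L + mdeg R \<noteq> mdeg P"
    if gt: "max_index Br + max_index Bc > mdeg P" and L: "L \<in> carrier_mat m r"
      and R: "R \<in> carrier_mat r n" and PLR: "P = L * R" for L R
  proof -
    have e: "L * 1\<^sub>m r = L" using right_mult_one_mat[OF L] .
    have "P = L * 1\<^sub>m r * R" unfolding e by (rule PLR)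
    hence "max_index Br + max_index Bc \<le> mdeg L + mdeg R" by (rule mb[OF L one_carrier_mat R])
    thus ?thesis using gt by linarith
  qed
  show ?thesis
  proof (intro conjI impI allI)
    fix L E R
    assume "L \<in> carrier_mat m r" "E \<in> carrier_mat r r" "R \<in> carrier_mat r n" "P = L * E * R"
    thus "mdeg L + mdeg E + mdeg R \<ge> mdeg L + mdeg R" "mdeg L + mdeg R \<ge> max_index Br + max_index Bc"
      using part1 by blast+
  next
    fix L E R
    assume "max_index Br + max_index Bc > mdeg P"
      "L \<in> carrier_mat m r" "E \<in> carrier_mat r r" "R \<in> carrier_mat r n" "P = L * E * R"
    thus "mdeg L + mdeg E + mdeg R \<noteq> mdeg P" by (rule part2)
  next
    fix L R
    assume "max_index Br + max_index Bc > mdeg P"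
      "L \<in> carrier_mat m r" "R \<in> carrier_mat r n" "P = L * R"
    thus "mdeg L + mdeg R \<noteq> mdeg P" by (rule part3)
  qed
qed

end
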